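(* Let $x,y\in\mathbb R^d$ with $\|x\|_2\le1$, $\|y\|_2\le1$, and let $\sigma\in C^1(\mathbb R)$ satisfy $\sigma(0)=0$ and $\|\sigma'\|_\infty\le1$. Let $a\sim\mathcal N(0,1)$ and $w\sim\mathcal N(0,I_d)$. Then for any $\varepsilon>0$: (i) $X_1:=\frac1{\varepsilon^2}\sigma(\varepsilon w^\top x)\sigma(\varepsilon w^\top y)$ satisfies $\|X_1\|_{\psi_1}\le C_{\psi,d}$; (ii) $X_2:=a^2\sigma'(\varepsilon w^\top x)\sigma'(\varepsilon w^\top y)\langle x,y\rangle$ satisfies $\|X_2\|_{\psi_1}\le C_{\psi,1}$.
   Context: The sub-exponential norm of a random variable $X$ is $\|X\|_{\psi_1}:=\inf\{s>0:\mathbb E\exp(|X|/s)\le2\}$. $C_{\psi,d}$ denotes the sub-exponential norm of a chi-square random variable with $d$ degrees of freedom. *)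

theory Defs
  imports "HOL-Probability.Probability"
begin

text \<open>Sub-exponential (psi_1) norm of a random variable X on the measure space M:
  inf {s > 0. E exp(|X|/s) \<le> 2}, taken in [0,\<infinity>] (inf of the empty set is \<infinity>).\<close>
definition psi1_norm :: "'a measure \<Rightarrow> ('a \<Rightarrow> real) \<Rightarrow> ennreal" where
  "psi1_norm M X =
     (INF s \<in> {s::real. s > 0 \<and> (\<integral>\<^sup>+ \<omega>. ennreal (exp (\<bar>X \<omega>\<bar> / s)) \<partial>M) \<le> 2}. ennreal s)"

definition chi_sq_density :: "nat \<Rightarrow> real \<Rightarrow> real" where
  "chi_sq_density k x =
     (if x > 0 then x powr (real k / 2 - 1) * exp (- x / 2) / (2 powr (real k / 2) * Gamma (real k / 2))
      else 0)"

text \<open>C_{psi,d}: the psi_1 norm of a chi-square random variable with d degrees of freedom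
  (realised as the identity on the chi-square distribution).\<close>
definition C_psi :: "nat \<Rightarrow> ennreal" where
  "C_psi d = psi1_norm (density lborel (\<lambda>x. ennreal (chi_sq_density d x))) (\<lambda>x. x)"

text \<open>Density of the standard Gaussian N(0, I_d) on real^'n (d = CARD('n)).\<close>
definition std_gauss_vec_density :: "real ^ 'n \<Rightarrow> real" where
  "std_gauss_vec_density v = (\<Prod>i\<in>UNIV. std_normal_density (v $ i))"

end

theory Submission
  imports Defs
begin

lemma chi_meas[measurable]: "chi_sq_density k \<in> borel_measurable borel"
  unfolding chi_sq_density_def by measurable

lemma aux_alg:
  fixes u c x :: real assumes "u = 1 - 2*c" "u \<noteq> 0"
  shows "- (x\<^sup>2/u) / 2 + c * (x\<^sup>2/u) = - x\<^sup>2 / 2"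
proof -
  have "- (x\<^sup>2/u) / 2 + c * (x\<^sup>2/u) = x\<^sup>2*(2*c-1)/(2*u)" using assms(2) by (simp add: field_simps)
  also have "2*c-1 = -u" using assms(1) by simp
  also have "x\<^sup>2*(-u)/(2*u) = - x\<^sup>2 / 2" using assms(2) by simp
  finally show ?thesis .
qed

lemma gauss_mgf:
  fixes c :: real assumes c: "0 \<le> c" "c < 1/2"
  shows "(\<integral>\<^sup>+t. ennreal (std_normal_density t * exp (c * t\<^sup>2)) \<partial>lborel) = ennreal (1 / sqrt (1 - 2*c))"
proof -
  define r where "r = sqrt (1-2*c)"
  have r: "r > 0" using c by (simp add: r_def)
  have r2: "r\<^sup>2 = 1 - 2*c" using c by (simp add: r_def)
  have "(\<integral>\<^sup>+t. ennreal (std_normal_density t * exp (c * t\<^sup>2)) \<partial>lborel)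
     = ennreal \<bar>1/r\<bar> * (\<integral>\<^sup>+x. ennreal (std_normal_density (0 + 1/r * x) * exp (c * (0 + 1/r*x)\<^sup>2)) \<partial>lborel)"
    by (rule nn_integral_real_affine) (use r in auto)
  also have "(\<lambda>x. std_normal_density (0 + 1/r * x) * exp (c * (0 + 1/r*x)\<^sup>2)) = std_normal_density"
  proof
    fix x
    have "- (x/r)\<^sup>2 / 2 + c * (x/r)\<^sup>2 = - x\<^sup>2 / 2"
    proof -
      have "(x/r)\<^sup>2 = x\<^sup>2/(1-2*c)" by (simp add: power_divide r2)
      moreover have "1 - 2*c \<noteq> 0" using c by simp
      ultimately show ?thesis using aux_alg[of "1-2*c" c x] by simp
    qed
    then show "std_normal_density (0 + 1/r * x) * exp (c * (0 + 1/r*x)\<^sup>2) = std_normal_density x"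
      unfolding std_normal_density_def by (simp add: mult.assoc exp_add[symmetric])
  qed
  also have "(\<integral>\<^sup>+x. ennreal (std_normal_density x) \<partial>lborel) = 1"
    by (subst nn_integral_eq_integral) auto
  finally show ?thesis using r by (simp add: r_def)
qed

lemma chi_nonneg: "chi_sq_density k x \<ge> 0"
proof (cases "k = 0")
  case True then show ?thesis by (simp add: chi_sq_density_def)
next
  case False
  then have "Gamma (real k / 2) > 0" by (intro Gamma_real_pos) simp
  then show ?thesis by (simp add: chi_sq_density_def)
qed

lemma chi_mgf:
  fixes s :: real assumes s: "s > 2" and k: "k > 0"
  shows "(\<integral>\<^sup>+x. ennreal (exp (\<bar>x\<bar>/s)) \<partial>density lborel (\<lambda>x. ennreal (chi_sq_density k x)))
        = ennreal ((1-2/s) powr (-(real k/2)))"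
proof -
  define \<alpha> where "\<alpha> = real k / 2"
  define l where "l = 1/2 - 1/s"
  define C where "C = 1 / (2 powr \<alpha> * Gamma \<alpha>)"
  have \<alpha>: "\<alpha> > 0" using k by (simp add: \<alpha>_def)
  have l: "l > 0" using s by (simp add: l_def field_simps)
  have G: "Gamma \<alpha> > 0" using \<alpha> by (rule Gamma_real_pos)
  have C: "C > 0" using G by (simp add: C_def)
  define h where "h x = indicator {0..} x * x powr (\<alpha> - 1) * exp (- l * x)" for x :: real
  have h_nn: "h x \<ge> 0" for x by (simp add: h_def)
  have hm[measurable]: "h \<in> borel_measurable borel" unfolding h_def[abs_def] by measurable
  have pt: "chi_sq_density k x * exp (\<bar>x\<bar>/s) = C * h x" for x
  proof (cases "x > 0")
    case True
    have "exp (- x / 2) * exp (x/s) = exp (- l * x)"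
      by (simp add: l_def exp_add[symmetric] algebra_simps)
    then show ?thesis using True
      by (simp add: chi_sq_density_def h_def C_def \<alpha>_def)
  next
    case False
    then show ?thesis by (cases "x = 0") (auto simp: chi_sq_density_def h_def)
  qed
  have 1: "(\<integral>\<^sup>+x. ennreal (exp (\<bar>x\<bar>/s)) \<partial>density lborel (\<lambda>x. ennreal (chi_sq_density k x)))
      = (\<integral>\<^sup>+x. ennreal C * ennreal (h x) \<partial>lborel)"
    by (subst nn_integral_density)
       (auto intro!: nn_integral_cong simp: ennreal_mult'[symmetric] chi_nonneg pt C h_nn ennreal_mult[OF less_imp_le[OF C] h_nn])
  also have "\<dots> = ennreal C * (\<integral>\<^sup>+x. ennreal (h x) \<partial>lborel)"
    by (rule nn_integral_cmult) measurable
  finally have L: "(\<integral>\<^sup>+x. ennreal (exp (\<bar>x\<bar>/s)) \<partial>density lborel (\<lambda>x. ennreal (chi_sq_density k x)))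
      = ennreal C * (\<integral>\<^sup>+x. ennreal (h x) \<partial>lborel)" .
  define g where "g t = indicator {0..} t * t powr (\<alpha> - 1) / exp t" for t :: real
  have gm[measurable]: "g \<in> borel_measurable borel" unfolding g_def[abs_def] by measurable
  have "ennreal (Gamma \<alpha>) = (\<integral>\<^sup>+t. ennreal (g t) \<partial>lborel)"
    using Gamma_conv_nn_integral_real[OF \<alpha>] by (simp add: g_def)
  also have "\<dots> = ennreal \<bar>l\<bar> * (\<integral>\<^sup>+x. ennreal (g (0 + l * x)) \<partial>lborel)"
    by (rule nn_integral_real_affine) (use l in auto)
  also have "(\<lambda>x. ennreal (g (0 + l * x))) = (\<lambda>x. ennreal (l powr (\<alpha> - 1)) * ennreal (h x))"
  proof
    fix x
    show "ennreal (g (0 + l * x)) = ennreal (l powr (\<alpha> - 1)) * ennreal (h x)"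
    proof (cases "x \<ge> 0")
      case True
      then have "g (0 + l * x) = l powr (\<alpha> - 1) * h x"
        using l by (simp add: g_def h_def powr_mult exp_minus field_simps)
      then show ?thesis by (simp add: ennreal_mult'[symmetric] h_nn)
    next
      case False
      then have "l * x < 0" using l by (simp add: mult_pos_neg)
      then show ?thesis using False by (simp add: g_def h_def)
    qed
  qed
  also have "(\<integral>\<^sup>+x. ennreal (l powr (\<alpha> - 1)) * ennreal (h x) \<partial>lborel)
      = ennreal (l powr (\<alpha> - 1)) * (\<integral>\<^sup>+x. ennreal (h x) \<partial>lborel)"
    by (rule nn_integral_cmult) measurable
  finally have "ennreal (Gamma \<alpha>) = ennreal (l * l powr (\<alpha> - 1)) * (\<integral>\<^sup>+x. ennreal (h x) \<partial>lborel)"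
    using l by (simp add: ennreal_mult[of l "l powr (\<alpha> - 1)"] mult.assoc)
  also have "l * l powr (\<alpha> - 1) = l powr \<alpha>"
    using l powr_add[of l 1 "\<alpha> - 1"] by simp
  finally have GI: "ennreal (Gamma \<alpha>) = ennreal (l powr \<alpha>) * (\<integral>\<^sup>+x. ennreal (h x) \<partial>lborel)" .
  have "ennreal (2 powr (-\<alpha>)) = ennreal C * ennreal (Gamma \<alpha>)"
    using G by (simp add: C_def ennreal_mult'[symmetric] powr_minus divide_inverse)
  also have "\<dots> = ennreal (l powr \<alpha>) * (ennreal C * (\<integral>\<^sup>+x. ennreal (h x) \<partial>lborel))"
    by (simp add: GI mult_ac)
  finally have "ennreal (l powr (-\<alpha>)) * ennreal (2 powr (-\<alpha>))
     = ennreal (l powr (-\<alpha>)) * ennreal (l powr \<alpha>) * (ennreal C * (\<integral>\<^sup>+x. ennreal (h x) \<partial>lborel))"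
    by (simp add: mult.assoc)
  also have "ennreal (l powr (-\<alpha>)) * ennreal (l powr \<alpha>) = 1"
    using l by (simp add: ennreal_mult'[symmetric] powr_add[symmetric])
  finally have "ennreal ((l * 2) powr (-\<alpha>)) = ennreal C * (\<integral>\<^sup>+x. ennreal (h x) \<partial>lborel)"
    using l by (simp add: ennreal_mult'[symmetric] powr_mult)
  moreover have "l * 2 = 1 - 2/s" by (simp add: l_def)
  ultimately show ?thesis using L by (simp add: \<alpha>_def)
qed


lemma gauss_vec_meas[measurable]: "std_gauss_vec_density \<in> borel_measurable (borel :: (real^'n) measure)"
  unfolding std_gauss_vec_density_def[abs_def] by measurable

lemma Basis_real_vec: "(Basis :: (real^'n) set) = (\<lambda>i. axis i 1) ` UNIV"
  unfolding Basis_vec_def by auto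

lemma card_Basis_real_vec: "card (Basis :: (real^'n) set) = CARD('n)"
  using DIM_cart[where 'a=real and 'b='n] by simp

lemma gauss_vec_mgf:
  fixes s :: real assumes s: "s > 2"
  shows "(\<integral>\<^sup>+v. ennreal (exp (norm (v::real^'n)^2 / s)) \<partial>density lborel (\<lambda>v. ennreal (std_gauss_vec_density v)))
        = ennreal ((1-2/s) powr (-(real CARD('n)/2)))"
proof -
  define f where "f t = std_normal_density t * exp ((1/s) * t\<^sup>2)" for t
  have f_nn: "f t \<ge> 0" for t using s by (simp add: f_def)
  have fm[measurable]: "f \<in> borel_measurable borel" unfolding f_def[abs_def] by measurable
  have inj: "inj (\<lambda>i::'n. axis i (1::real))" by (auto intro!: injI simp: axis_eq_axis)
  have pt: "std_gauss_vec_density v * exp (norm v^2/s) = (\<Prod>b\<in>Basis. f (v \<bullet> b))" for v :: "real^'n"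
  proof -
    have n2: "norm v ^ 2 = (\<Sum>i\<in>UNIV. (v $ i)^2)"
      unfolding norm_vec_def L2_set_def by (simp add: sum_nonneg)
    have "(\<Prod>b\<in>Basis. f (v \<bullet> b)) = (\<Prod>i\<in>UNIV. f (v $ i))"
      unfolding Basis_real_vec by (subst prod.reindex[OF inj]) (simp add: inner_axis)
    also have "\<dots> = (\<Prod>i\<in>UNIV. std_normal_density (v $ i)) * (\<Prod>i\<in>UNIV. exp ((1/s) * (v $ i)^2))"
      unfolding f_def by (rule prod.distrib)
    also have "(\<Prod>i\<in>UNIV. exp ((1/s) * (v $ i)^2)) = exp (norm v ^ 2 / s)"
      unfolding n2 by (simp add: exp_sum[symmetric] sum_divide_distrib)
    finally show ?thesis by (simp add: std_gauss_vec_density_def)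
  qed
  have eqf: "(\<lambda>x. ennreal (std_gauss_vec_density x) * ennreal (exp ((norm x)\<^sup>2 / s)))
     = (\<lambda>v::real^'n. ennreal (\<Prod>b\<in>Basis. f (v \<bullet> b)))"
  proof
    fix v :: "real^'n"
    show "ennreal (std_gauss_vec_density v) * ennreal (exp ((norm v)\<^sup>2 / s)) = ennreal (\<Prod>b\<in>Basis. f (v \<bullet> b))"
      by (subst pt[symmetric], subst ennreal_mult) (simp_all add: std_gauss_vec_density_def prod_nonneg)
  qed
  have "(\<integral>\<^sup>+v. ennreal (exp (norm (v::real^'n)^2 / s)) \<partial>density lborel (\<lambda>v. ennreal (std_gauss_vec_density v)))
      = (\<integral>\<^sup>+v. ennreal (\<Prod>b\<in>Basis. f ((v::real^'n) \<bullet> b)) \<partial>lborel)"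
    apply (subst nn_integral_density, simp)
     apply measurable
    apply (simp only: eqf)
    done
  also have "\<dots> = (\<Prod>b\<in>(Basis::(real^'n) set). (\<integral>\<^sup>+x. f x \<partial>lborel))"
    using nn_integral_lborel_prod[where f="\<lambda>_ x. ennreal (f x)" and 'a="real^'n"] by (simp add: f_nn prod_ennreal)
  also have "\<dots> = (\<Prod>b\<in>(Basis::(real^'n) set). ennreal (1 / sqrt (1 - 2*(1/s))))"
    using s gauss_mgf[of "1/s"] by (simp add: f_def)
  also have "\<dots> = ennreal ((1 / sqrt (1 - 2/s)) ^ CARD('n))"
    by (simp add: card_Basis_real_vec) (rule ennreal_power, use s in simp)
  also have "(1 / sqrt (1 - 2/s)) ^ CARD('n) = (1-2/s) powr (-(real CARD('n)/2))"
  proof -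
    have p: "1 - 2/s > 0" using s by (simp add: field_simps)
    have "1 / sqrt (1 - 2/s) = (1 - 2/s) powr (-(1/2))"
      using p by (simp add: powr_minus_divide powr_half_sqrt)
    then show ?thesis using p s powr_power[of "1-2/s" "-(1/2)" "CARD('n)"] by simp
  qed
  finally show ?thesis .
qed


lemma chi_set_gt2:
  fixes s :: real assumes k: "k > 0" and s0: "s > 0"
    and le: "(\<integral>\<^sup>+x. ennreal (exp (\<bar>x\<bar>/s)) \<partial>density lborel (\<lambda>x. ennreal (chi_sq_density k x))) \<le> 2"
  shows "s > 2"
proof (rule ccontr)
  assume "\<not> s > 2"
  then have s2: "s \<le> 32/15" by simp
  have "(\<integral>\<^sup>+x. ennreal (exp (\<bar>x\<bar>/(32/15))) \<partial>density lborel (\<lambda>x. ennreal (chi_sq_density k x)))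
     \<le> (\<integral>\<^sup>+x. ennreal (exp (\<bar>x\<bar>/s)) \<partial>density lborel (\<lambda>x. ennreal (chi_sq_density k x)))"
  proof (rule nn_integral_mono)
    fix x :: real
    have "\<bar>x\<bar>/(32/15) \<le> \<bar>x\<bar>/s" using s0 s2 by (intro divide_left_mono) auto
    then show "ennreal (exp (\<bar>x\<bar>/(32/15))) \<le> ennreal (exp (\<bar>x\<bar>/s))" by simp
  qed
  also have "(\<integral>\<^sup>+x. ennreal (exp (\<bar>x\<bar>/(32/15))) \<partial>density lborel (\<lambda>x. ennreal (chi_sq_density k x)))
      = ennreal ((1-2/(32/15)) powr (-(real k/2)))"
    by (rule chi_mgf) (use k in auto)
  also have "(1-2/(32/15)) powr (-(real k/2)) = 16 powr (real k / 2)"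
    by (simp add: powr_minus_divide powr_divide)
  finally have A: "ennreal (16 powr (real k / 2)) \<le> 2" using le by simp
  have "16 powr (1/2) \<le> (16::real) powr (real k / 2)" using k by (intro powr_mono) auto
  moreover have "(16::real) powr (1/2) = 4" by (simp add: powr_half_sqrt)
  ultimately have B: "ennreal 4 \<le> ennreal (16 powr (real k / 2))" by (intro ennreal_leI) simp
  have "ennreal 4 \<le> 2" using order_trans[OF B A] .
  then have "ennreal 4 \<le> ennreal 2" by simp
  then have "(4::real) \<le> 2" by (subst (asm) ennreal_le_iff) auto
  then show False by simp
qed

lemma sigma_bound:
  assumes d: "\<And>t. (\<sigma> has_real_derivative \<sigma>' t) (at t)"
    and b: "\<And>t. \<bar>\<sigma>' t\<bar> \<le> 1" and z: "\<sigma> 0 = 0"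
  shows "\<bar>\<sigma> u\<bar> \<le> \<bar>u\<bar>"
proof -
  consider "u > 0" | "u = 0" | "u < 0" by linarith
  then show ?thesis
  proof cases
    case 1
    obtain t where "\<sigma> u - \<sigma> 0 = (u - 0) * \<sigma>' t" using MVT2[OF 1, of \<sigma> \<sigma>'] d by blast
    then have "\<bar>\<sigma> u\<bar> = \<bar>u\<bar> * \<bar>\<sigma>' t\<bar>" using z by (simp add: abs_mult)
    also have "\<dots> \<le> \<bar>u\<bar> * 1" using b[of t] by (intro mult_left_mono) auto
    finally show ?thesis by simp
  next
    case 2 then show ?thesis using z by simp
  next
    case 3
    obtain t where "\<sigma> 0 - \<sigma> u = (0 - u) * \<sigma>' t" using MVT2[OF 3, of \<sigma> \<sigma>'] d by blast
    then have "\<bar>\<sigma> u\<bar> = \<bar>u\<bar> * \<bar>\<sigma>' t\<bar>" using z by (simp add: abs_mult)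
    also have "\<dots> \<le> \<bar>u\<bar> * 1" using b[of t] by (intro mult_left_mono) auto
    finally show ?thesis by simp
  qed
qed

lemma psi_compare:
  assumes "\<And>s. s > 0 \<Longrightarrow> (\<integral>\<^sup>+x. ennreal (exp (\<bar>x\<bar>/s)) \<partial>N) \<le> 2 \<Longrightarrow>
              (\<integral>\<^sup>+\<omega>. ennreal (exp (\<bar>X \<omega>\<bar>/s)) \<partial>M) \<le> 2"
  shows "psi1_norm M X \<le> psi1_norm N (\<lambda>x. x)"
  unfolding psi1_norm_def by (rule INF_superset_mono) (auto intro: assms)

theorem lemma2:
  fixes x y :: "real ^ 'n"
    and \<sigma> \<sigma>' :: "real \<Rightarrow> real"
    and M :: "'w measure"
    and a :: "'w \<Rightarrow> real"
    and w :: "'w \<Rightarrow> real ^ 'n"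
    and \<epsilon> :: real
  assumes "norm x \<le> 1" and "norm y \<le> 1"
    and "\<And>t. (\<sigma> has_real_derivative \<sigma>' t) (at t)"
    and "continuous_on UNIV \<sigma>'"
    and "\<sigma> 0 = 0"
    and "\<And>t. \<bar>\<sigma>' t\<bar> \<le> 1"
    and "prob_space M"
    and "a \<in> measurable M lborel"
    and "distr M lborel a = density lborel (\<lambda>t. ennreal (std_normal_density t))"
    and "w \<in> measurable M lborel"
    and "distr M lborel w = density lborel (\<lambda>v. ennreal (std_gauss_vec_density v))"
    and "\<epsilon> > 0"
  shows "psi1_norm M (\<lambda>\<omega>. \<sigma> (\<epsilon> * (w \<omega> \<bullet> x)) * \<sigma> (\<epsilon> * (w \<omega> \<bullet> y)) / \<epsilon>\<^sup>2)
           \<le> C_psi CARD('n) \<and>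
         psi1_norm M (\<lambda>\<omega>. (a \<omega>)\<^sup>2 * \<sigma>' (\<epsilon> * (w \<omega> \<bullet> x)) * \<sigma>' (\<epsilon> * (w \<omega> \<bullet> y)) * (x \<bullet> y))
           \<le> C_psi 1"
proof
  note nx = assms(1) and ny = assms(2) and d = assms(3) and z = assms(5) and b = assms(6)
  note am = assms(8) and ad = assms(9) and wm = assms(10) and wd = assms(11) and ep = assms(12)
  have pt1: "\<bar>\<sigma> (\<epsilon> * (w \<omega> \<bullet> x)) * \<sigma> (\<epsilon> * (w \<omega> \<bullet> y)) / \<epsilon>\<^sup>2\<bar> \<le> norm (w \<omega>) ^ 2" for \<omega>
  proof -
    have px: "\<bar>w \<omega> \<bullet> x\<bar> \<le> norm (w \<omega>)"
      using Cauchy_Schwarz_ineq2[of "w \<omega>" x] nx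
      by (meson mult_left_le norm_ge_zero order_trans)
    have py: "\<bar>w \<omega> \<bullet> y\<bar> \<le> norm (w \<omega>)"
      using Cauchy_Schwarz_ineq2[of "w \<omega>" y] ny
      by (meson mult_left_le norm_ge_zero order_trans)
    have "\<bar>\<sigma> (\<epsilon> * (w \<omega> \<bullet> x))\<bar> \<le> \<epsilon> * norm (w \<omega>)"
      using sigma_bound[OF d b z, of "\<epsilon> * (w \<omega> \<bullet> x)"] px ep
      by (simp add: abs_mult) (meson mult_left_mono less_imp_le order_trans)
    moreover have "\<bar>\<sigma> (\<epsilon> * (w \<omega> \<bullet> y))\<bar> \<le> \<epsilon> * norm (w \<omega>)"
      using sigma_bound[OF d b z, of "\<epsilon> * (w \<omega> \<bullet> y)"] py ep
      by (simp add: abs_mult) (meson mult_left_mono less_imp_le order_trans)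
    ultimately have "\<bar>\<sigma> (\<epsilon> * (w \<omega> \<bullet> x)) * \<sigma> (\<epsilon> * (w \<omega> \<bullet> y))\<bar> \<le> (\<epsilon> * norm (w \<omega>)) * (\<epsilon> * norm (w \<omega>))"
      unfolding abs_mult by (intro mult_mono) auto
    then show ?thesis using ep by (simp add: abs_mult power2_eq_square field_simps)
  qed
  show "psi1_norm M (\<lambda>\<omega>. \<sigma> (\<epsilon> * (w \<omega> \<bullet> x)) * \<sigma> (\<epsilon> * (w \<omega> \<bullet> y)) / \<epsilon>\<^sup>2) \<le> C_psi CARD('n)"
    unfolding C_psi_def
  proof (rule psi_compare)
    fix s :: real assume s0: "s > 0" and le: "(\<integral>\<^sup>+x. ennreal (exp (\<bar>x\<bar>/s)) \<partial>density lborel (\<lambda>x. ennreal (chi_sq_density CARD('n) x))) \<le> 2"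
    have s: "s > 2" by (rule chi_set_gt2[OF _ s0 le]) simp
    have "(\<integral>\<^sup>+\<omega>. ennreal (exp (\<bar>\<sigma> (\<epsilon> * (w \<omega> \<bullet> x)) * \<sigma> (\<epsilon> * (w \<omega> \<bullet> y)) / \<epsilon>\<^sup>2\<bar>/s)) \<partial>M)
        \<le> (\<integral>\<^sup>+\<omega>. ennreal (exp (norm (w \<omega>) ^ 2/s)) \<partial>M)"
      using s0 by (intro nn_integral_mono ennreal_leI, subst exp_le_cancel_iff) (rule divide_right_mono[OF pt1], simp)
    also have "\<dots> = (\<integral>\<^sup>+v. ennreal (exp (norm v ^ 2/s)) \<partial>distr M lborel w)"
      by (rule nn_integral_distr[symmetric]) (use wm in auto)
    also have "\<dots> = ennreal ((1-2/s) powr (-(real CARD('n)/2)))"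
      unfolding wd by (rule gauss_vec_mgf[OF s])
    also have "\<dots> = (\<integral>\<^sup>+x. ennreal (exp (\<bar>x\<bar>/s)) \<partial>density lborel (\<lambda>x. ennreal (chi_sq_density CARD('n) x)))"
      by (rule chi_mgf[symmetric, OF s]) simp
    finally show "(\<integral>\<^sup>+\<omega>. ennreal (exp (\<bar>\<sigma> (\<epsilon> * (w \<omega> \<bullet> x)) * \<sigma> (\<epsilon> * (w \<omega> \<bullet> y)) / \<epsilon>\<^sup>2\<bar>/s)) \<partial>M) \<le> 2"
      using le by simp
  qed
  have pt2: "\<bar>(a \<omega>)\<^sup>2 * \<sigma>' (\<epsilon> * (w \<omega> \<bullet> x)) * \<sigma>' (\<epsilon> * (w \<omega> \<bullet> y)) * (x \<bullet> y)\<bar> \<le> (a \<omega>)\<^sup>2" for \<omega>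
  proof -
    have "\<bar>x \<bullet> y\<bar> \<le> 1"
      using Cauchy_Schwarz_ineq2[of x y] nx ny
      by (meson mult_le_one norm_ge_zero order_trans)
    then have "\<bar>\<sigma>' (\<epsilon> * (w \<omega> \<bullet> x))\<bar> * \<bar>\<sigma>' (\<epsilon> * (w \<omega> \<bullet> y))\<bar> * \<bar>x \<bullet> y\<bar> \<le> 1 * 1 * 1"
      using b by (intro mult_mono) auto
    then have "(a \<omega>)\<^sup>2 * (\<bar>\<sigma>' (\<epsilon> * (w \<omega> \<bullet> x))\<bar> * \<bar>\<sigma>' (\<epsilon> * (w \<omega> \<bullet> y))\<bar> * \<bar>x \<bullet> y\<bar>) \<le> (a \<omega>)\<^sup>2 * 1"
      by (intro mult_left_mono) auto
    then show ?thesis by (simp add: abs_mult mult.assoc)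
  qed
  show "psi1_norm M (\<lambda>\<omega>. (a \<omega>)\<^sup>2 * \<sigma>' (\<epsilon> * (w \<omega> \<bullet> x)) * \<sigma>' (\<epsilon> * (w \<omega> \<bullet> y)) * (x \<bullet> y)) \<le> C_psi 1"
    unfolding C_psi_def
  proof (rule psi_compare)
    fix s :: real assume s0: "s > 0" and le: "(\<integral>\<^sup>+x. ennreal (exp (\<bar>x\<bar>/s)) \<partial>density lborel (\<lambda>x. ennreal (chi_sq_density 1 x))) \<le> 2"
    have s: "s > 2" by (rule chi_set_gt2[OF _ s0 le]) simp
    have "(\<integral>\<^sup>+\<omega>. ennreal (exp (\<bar>(a \<omega>)\<^sup>2 * \<sigma>' (\<epsilon> * (w \<omega> \<bullet> x)) * \<sigma>' (\<epsilon> * (w \<omega> \<bullet> y)) * (x \<bullet> y)\<bar>/s)) \<partial>M)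
        \<le> (\<integral>\<^sup>+\<omega>. ennreal (exp ((a \<omega>)\<^sup>2/s)) \<partial>M)"
      using s0 by (intro nn_integral_mono ennreal_leI, subst exp_le_cancel_iff) (rule divide_right_mono[OF pt2], simp)
    also have "\<dots> = (\<integral>\<^sup>+t. ennreal (exp (t\<^sup>2/s)) \<partial>distr M lborel a)"
      by (rule nn_integral_distr[symmetric]) (use am in auto)
    also have "\<dots> = (\<integral>\<^sup>+t. ennreal (std_normal_density t * exp ((1/s) * t\<^sup>2)) \<partial>lborel)"
      unfolding ad by (subst nn_integral_density) (auto intro!: nn_integral_cong simp: ennreal_mult)
    also have "\<dots> = ennreal (1 / sqrt (1 - 2*(1/s)))"
      by (rule gauss_mgf) (use s in auto)
    also have "1 / sqrt (1 - 2*(1/s)) = (1-2/s) powr (-(real 1/2))"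
      using s by (simp add: powr_minus_divide powr_half_sqrt)
    also have "ennreal \<dots> = (\<integral>\<^sup>+x. ennreal (exp (\<bar>x\<bar>/s)) \<partial>density lborel (\<lambda>x. ennreal (chi_sq_density 1 x)))"
      by (rule chi_mgf[symmetric, OF s]) simp
    finally show "(\<integral>\<^sup>+\<omega>. ennreal (exp (\<bar>(a \<omega>)\<^sup>2 * \<sigma>' (\<epsilon> * (w \<omega> \<bullet> x)) * \<sigma>' (\<epsilon> * (w \<omega> \<bullet> y)) * (x \<bullet> y)\<bar>/s)) \<partial>M) \<le> 2"
      using le by simp
  qed
qed

end
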